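(* Given an untwisted ($F=NS$) or $\mu$-twisted ($F=R$) super spectral curve as in the context, there is at most one family $(\omega_{g,n|2m})$ of multilinear differentials respecting the polarization (with the stated symmetry properties) that satisfies the abstract super loop equations. More precisely, each $\omega_{g,n|2m}$ of such a solution is uniquely determined by the $\omega_{g',n'|2m'}$ with $2g'+n'+2m'<2g+n+2m$ together with the curve data.
   Context: Fix $F\in\{NS,R\}$, $f=\frac12$ if $F=NS$, $f=0$ if $F=R$. Curve data: integer $N\ge1$; $\tau_l,Q_l\in\mathbb C$ ($l\ge-(N-1)$) with $\tau_{-(N-1)}\neq0$; $\phi_{kl}=\phi_{lk}$ ($k,l\ge1$); $D_1,\dots,D_N$; $\psi^F_{kl}$ ($k,l\ge0$) with $\psi^{NS}$ antisymmetric if $F=NS$, and $\psi^R_{00}=0$, $\psi^R_{kl}+\psi^R_{lk}+\psi^R_{0k}\psi^R_{0l}=0$ if $F=R$. Bases: $d\xi_l(z)=z^{l-1}dz$ ($l\ge1$), $d\xi_0(z)=dz/z$, $d\xi_{-l}(z)=z^{-l-1}dz+\sum_{m\ge1}\frac{\phi_{lm}}{l}d\xi_m(z)$ ($l\ge1$). With a Grassmann variable $\theta$: $\Theta^{NS}_z=\theta+dz\,\partial_\theta$, $\Theta^R_z=\theta+z\,dz\,\partial_\theta$; write $\Theta^F_z$ (and $\Theta^F_i$ for the variable $(z_i,\theta_i)$). If $F=NS$: $\eta_{l+1/2}=z^l\Theta^{NS}_z$, $\eta_{-l-1/2}=(z^{-l-1}+\sum_{k\ge0}\psi^{NS}_{lk}z^k)\Theta^{NS}_z$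 for $l\ge0$. If $F=R$: $\eta_l=z^{l-1}\Theta^R_z$ ($l\ge1$), $\eta_0=(z^{-1}+\sum_{k\ge1}\psi^R_{0k}z^{k-1})\Theta^R_z$, $\eta_{-l}=(z^{-l-1}+\sum_{k\ge0}\psi^R_{lk}z^{k-1})\Theta^R_z$ ($l\ge1$). $V^{B-}_z$ is spanned by $d\xi_{-l}$, $l\ge1$; $V^{F-}_u$ by $\eta_{-j-f}(u,\theta)$, $j\ge0$; $V^{B+}_z=\mathbb C\llbracket z\rrbracket dz$, $V^{F+}_z=\mathbb C\llbracket z\rrbracket\Theta^F_z$. Given differentials: $\omega_{0,1|0}(z)=\sum_{l\ge-(N-1)}\tau_ld\xi_l(z)$; $\omega_{\frac12,1|0}(z)=\sum_{l\ge-(N-1)}Q_ld\xi_l(z)$ (so $\mathrm{Res}_{z\to0}\omega_{\frac12,1|0}=Q_0$); $\omega_{1,1|0}(z)=\sum_{k=1}^ND_kd\xi_{-k}(z)$; $\omega_{0,2|0}(z_1,z_2)=\frac{dz_1dz_2}{(z_1-z_2)^2}+\sum_{k,l\ge1}\phi_{kl}d\xi_k(z_1)d\xi_l(z_2)$; $\omega_{0,0|2}=\omega^F_{0,0|2}$ with $\omega^{NS}_{0,0|2}(|z_1,z_2)=-\frac{\Theta^{NS}_1\Theta^{NS}_2}{z_1-z_2}+\sum_{k,l\ge0}\psi^{NS}_{kl}\eta_{k+\frac12}(z_1)\eta_{l+\frac12}(z_2)$ and $\omega^R_{0,0|2}(|z_1,z_2)=-\frac12\frac{z_1+z_2}{z_1-z_2}\frac{\Theta^R_1\Theta^R_2}{z_1z_2}-\sum_{k,l\ge1}\frac{\psi^R_{k-1,l-1}-\psi^R_{l-1,k-1}}{1+\delta_{(k-1)(l-1),0}}\frac{\eta_l(z_1)\eta_k(z_2)}{2z_1z_2}$.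 Unknowns: for $g\in\frac12\mathbb Z_{\ge0}$, $n,m\ge0$, $2g+n+2m\ge3$, $(g,n,m)\ne(1,1,0)$, a differential $\omega_{g,n|2m}(z_1,\dots,z_n|u_1,\dots,u_{2m})\in\bigotimes_kV^{B-}_{z_k}\otimes\bigotimes_lV^{F-}_{u_l}$ ("respecting the polarization"; $u_l$ stands for $(u_l,\theta_l)$), symmetric in the $z$'s and antisymmetric in the $u$'s; in the formulas below, $\omega$'s with the listed unstable indices mean the given differentials above and all other $\omega$ with $2g+n+2m\le2$ are zero. Operator $\mathcal D_z$: $\mathcal D_z\cdot(h(z)dz)=dh(z)\,dz$, $\mathcal D_z\cdot(h(z)\Theta^F_z)=dh(z)\,\Theta^F_z$. Writing $I=(z_1,\dots)$, $J$ fermionic variables, $(-1)^\rho$ the sign of the permutation $J\mapsto J_1\cup J_2$, and sums over $g_1+g_2=g$ ($g_i\in\frac12\mathbb Z_{\ge0}$) and all splittings $I=I_1\sqcup I_2$, $J=J_1\sqcup J_2$ with $n_i=|I_i|$ and matching $m_i$: $\mathcal Q^{BF}_{g,n|2m}(I|z,J)=\omega_{g-1,n+1|2m}(z,I|z,J)+Q_0\big(\mathcal D_z\cdot\omega_{g-\frac12,n|2m}(I|z,J)+\frac{1-2f}{2}d\xi_0(z)\omega_{g-\frac12,n|2m}(I|z,J)\big)+\sum(-1)^\rho\omega_{g_1,n_1+1|2m_1}(z,I_1|J_1)\,\omega_{g_2,n_2|2m_2}(I_2|z,J_2)$; $\mathcal Q^{BB}_{g,n+1|2m}(z,I|J)=\omega_{g-1,n+2|2m}(z,z,I|J)+\frac12Q_0\,\mathcal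 D_z\cdot\omega_{g-\frac12,n+1|2m}(z,I|J)+\sum(-1)^\rho\omega_{g_1,n_1+1|2m_1}(z,I_1|J_1)\,\omega_{g_2,n_2+1|2m_2}(z,I_2|J_2)$; $\mathcal Q^{FF}_{g,n+1|2m}(z,I|J)=-\frac12\mathcal D_z\cdot\omega_{g-1,n|2m+2}(I|z,u,J)\big|_{u=z}+\frac12\sum(-1)^\rho\mathcal D_z\cdot\omega_{g_1,n_1|2m_1}(I_1|z,J_1)\,\omega_{g_2,n_2|2m_2}(I_2|z,J_2)$. Abstract super loop equations: (1) for $2g+n+2m\ge2$, $(g,n,m)\ne(1,0,0)$: $\mathcal Q^{BB}_{g,n+1|2m}(z,I|J)+\mathcal Q^{FF}_{g,n+1|2m}(z,I|J)\in z^{-N-1}V^{B+}_z\otimes V^{B+}_z$ as a function of $z$; (2) for $2g+n+2m\ge3$: $\mathcal Q^{BF}_{g,n|2m}(I|z,J)\in z^{-N-1}V^{B+}_z\otimes V^{F+}_z$ as a function of $z$. *)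

theory Defs
  imports "HOL-Analysis.Analysis"
begin

text \<open>
Genus g is encoded by G = 2g :: nat.  The flavour F is encoded by the boolean ns
(True: F = NS, f = 1/2;  False: F = R, f = 0).
A differential in several variables is encoded by its coefficient function on
exponent vectors: for bosonic variables z_k the exponent e_k means z_k^{e_k} dz_k,
for fermionic variables u_j the exponent d_j means u_j^{d_j} Theta_j
(the Theta-factors kept in positional order).
\<close>

record curve =
  ns   :: bool
  NN   :: nat
  tau  :: "int \<Rightarrow> complex"          \<comment> \<open>tau_l, l \<ge> -(N-1)\<close>
  Qc   :: "int \<Rightarrow> complex"          \<comment> \<open>Q_l, l \<ge> -(N-1)\<close>
  phi  :: "nat \<Rightarrow> nat \<Rightarrow> complex"   \<comment> \<open>phi_kl, k,l \<ge> 1\<close>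
  Dc   :: "nat \<Rightarrow> complex"          \<comment> \<open>D_1,...,D_N\<close>
  psi  :: "nat \<Rightarrow> nat \<Rightarrow> complex"   \<comment> \<open>psi^F_kl, k,l \<ge> 0\<close>

text \<open>c = 1 - 2f\<close>
definition cf :: "curve \<Rightarrow> int" where
  "cf C = (if ns C then 0 else 1)"

text \<open>Coefficient of z^e dz in d xi_{-(a+1)}(z) = z^{-a-2} dz + sum_m phi_{a+1,m}/(a+1) z^{m-1} dz.\<close>
definition dxi_neg :: "curve \<Rightarrow> nat \<Rightarrow> int \<Rightarrow> complex" where
  "dxi_neg C a e =
     (if e = - int a - 2 then 1 else 0)
   + (if 0 \<le> e then phi C (a + 1) (nat e + 1) / of_nat (a + 1) else 0)"

text \<open>Coefficient of z^e dz in d xi_l(z), l an arbitrary integer.\<close>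
definition dxi :: "curve \<Rightarrow> int \<Rightarrow> int \<Rightarrow> complex" where
  "dxi C l e =
     (if 1 \<le> l then (if e = l - 1 then 1 else 0)
      else if l = 0 then (if e = -1 then 1 else 0)
      else dxi_neg C (nat (- l) - 1) e)"

text \<open>Coefficient of z^e Theta_z in eta_{-j-f}(z), j \<ge> 0.\<close>
definition eta_neg :: "curve \<Rightarrow> nat \<Rightarrow> int \<Rightarrow> complex" where
  "eta_neg C j e =
     (if ns C then
        (if e = - int j - 1 then 1 else 0) + (if 0 \<le> e then psi C j (nat e) else 0)
      else if j = 0 then
        (if e = -1 then 1 else 0) + (if 0 \<le> e then psi C 0 (nat e + 1) else 0)
      else
        (if e = - int j - 1 then 1 else 0) + (if -1 \<le> e then psi C j (nat (e + 1)) else 0))"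

text \<open>omega_{0,1|0}(z) = sum_{l \<ge> -(N-1)} tau_l d xi_l(z): coefficient of z^e dz.\<close>
definition om01 :: "curve \<Rightarrow> int \<Rightarrow> complex" where
  "om01 C e = infsum (\<lambda>l. tau C l * dxi C l e) {1 - int (NN C)..}"

text \<open>omega_{1/2,1|0}(z) = sum_{l \<ge> -(N-1)} Q_l d xi_l(z).\<close>
definition om_half1 :: "curve \<Rightarrow> int \<Rightarrow> complex" where
  "om_half1 C e = infsum (\<lambda>l. Qc C l * dxi C l e) {1 - int (NN C)..}"

text \<open>omega_{1,1|0}(z) = sum_{k=1}^N D_k d xi_{-k}(z).\<close>
definition om11 :: "curve \<Rightarrow> int \<Rightarrow> complex" where
  "om11 C e = (\<Sum>k\<in>{1..NN C}. Dc C k * dxi_neg C (k - 1) e)"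

text \<open>omega_{0,2|0}(z,w), coefficient of z^a w^b dz dw, expanded as a function of z near 0
  (i.e. in the region |z| < |w|): 1/(z-w)^2 = sum_{k\<ge>1} k z^{k-1} w^{-k-1}.\<close>
definition om02 :: "curve \<Rightarrow> int \<Rightarrow> int \<Rightarrow> complex" where
  "om02 C a b =
     (if 0 \<le> a \<and> b = - a - 2 then of_int (a + 1) else 0)
   + (if 0 \<le> a \<and> 0 \<le> b then phi C (nat a + 1) (nat b + 1) else 0)"

text \<open>omega^F_{0,0|2}(|z,u), coefficient of z^a u^b Theta_z Theta_u, expanded in |z| < |u|.
  NS: -1/(z-u) = sum_{k\<ge>0} z^k u^{-k-1}.
  R:  -(1/2)(z+u)/((z-u) z u) = (1/2) z^{-1} u^{-1} + sum_{k\<ge>1} z^{k-1} u^{-k-1}, and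
      eta_l(z) eta_k(u)/(z u) = z^{l-2} u^{k-2} Theta_z Theta_u.\<close>
definition om002 :: "curve \<Rightarrow> int \<Rightarrow> int \<Rightarrow> complex" where
  "om002 C a b =
     (if ns C then
        (if 0 \<le> a \<and> b = - a - 1 then 1 else 0)
      + (if 0 \<le> a \<and> 0 \<le> b then psi C (nat a) (nat b) else 0)
      else
        (if a = -1 \<and> b = -1 then 1/2 else 0)
      + (if 0 \<le> a \<and> b = - a - 2 then 1 else 0)
      - (if -1 \<le> a \<and> -1 \<le> b then
           (psi C (nat (b + 1)) (nat (a + 1)) - psi C (nat (a + 1)) (nat (b + 1)))
             / (1 + (if (a + 1) * (b + 1) = 0 then 1 else 0)) / 2
         else 0))"

text \<open>A family of unknowns: W G n m ls js is the coefficient of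
  prod_k d xi_{-(ls!k + 1)}(z_k) * prod_j eta_{-(js!j) - f}(u_j)
  in omega_{G/2, n|2m}(z_1..z_n | u_1..u_{2m}) (this is "respecting the polarization").\<close>
type_synonym family = "nat \<Rightarrow> nat \<Rightarrow> nat \<Rightarrow> nat list \<Rightarrow> nat list \<Rightarrow> complex"

definition unknown_index :: "nat \<Rightarrow> nat \<Rightarrow> nat \<Rightarrow> bool" where
  "unknown_index G n m \<longleftrightarrow> 3 \<le> G + n + 2 * m \<and> (G, n, m) \<noteq> (2, 1, 0)"

definition supp :: "family \<Rightarrow> nat \<Rightarrow> nat \<Rightarrow> nat \<Rightarrow> (nat list \<times> nat list) set" where
  "supp W G n m = {(ls, js). length ls = n \<and> length js = 2 * m \<and> W G n m ls js \<noteq> 0}"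

text \<open>Element of (tensor V^{B-}) (tensor V^{F-}) (finite linear combination), symmetric in the
  bosonic and antisymmetric in the fermionic slots.\<close>
definition valid_family :: "family \<Rightarrow> bool" where
  "valid_family W \<longleftrightarrow> (\<forall>G n m. unknown_index G n m \<longrightarrow>
     finite (supp W G n m)
   \<and> (\<forall>ls js i j. length ls = n \<and> length js = 2 * m \<and> i < n \<and> j < n \<longrightarrow>
        W G n m (ls[i := ls ! j, j := ls ! i]) js = W G n m ls js)
   \<and> (\<forall>ls js i j. length ls = n \<and> length js = 2 * m \<and> i < 2 * m \<and> j < 2 * m \<and> i \<noteq> j \<longrightarrow>
        W G n m ls (js[i := js ! j, j := js ! i]) = - W G n m ls js))"

text \<open>Coefficient of prod z_k^{es!k} dz_k prod u_j^{ds!j} Theta_j in omega_{G/2,n|2m}, including the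
  given (unstable) differentials; for those with two arguments the first one is the
  distinguished variable z of the loop equations (expansion near z = 0).\<close>
definition om :: "curve \<Rightarrow> family \<Rightarrow> nat \<Rightarrow> nat \<Rightarrow> nat \<Rightarrow> int list \<Rightarrow> int list \<Rightarrow> complex" where
  "om C W G n m es ds =
     (if unknown_index G n m then
        (\<Sum>(ls, js)\<in>supp W G n m. W G n m ls js
            * (\<Prod>k<n. dxi_neg C (ls ! k) (es ! k))
            * (\<Prod>k<2 * m. eta_neg C (js ! k) (ds ! k)))
      else if (G, n, m) = (0, 1, 0) then om01 C (es ! 0)
      else if (G, n, m) = (1, 1, 0) then om_half1 C (es ! 0)
      else if (G, n, m) = (2, 1, 0) then om11 C (es ! 0)
      else if (G, n, m) = (0, 2, 0) then om02 C (es ! 0) (es ! 1)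
      else if (G, n, m) = (0, 0, 1) then om002 C (ds ! 0) (ds ! 1)
      else 0)"

text \<open>Sign of the permutation J \<mapsto> J_1 \<union> J_2, where J = positions {..<k}, J_1 = T (in order)
  followed by J_2 = {..<k} - T (in order).\<close>
definition shuffle_sign :: "nat set \<Rightarrow> nat \<Rightarrow> complex" where
  "shuffle_sign T k = (-1) ^ card {(i, j). i \<in> T \<and> j < k \<and> j \<notin> T \<and> j < i}"

text \<open>Q^BB_{g,n+1|2m}(z,I|J): coefficient of z^p dz^2 (times the monomial es, ds in I, J).\<close>
definition QBB :: "curve \<Rightarrow> family \<Rightarrow> nat \<Rightarrow> nat \<Rightarrow> nat \<Rightarrow> int \<Rightarrow> int list \<Rightarrow> int list \<Rightarrow> complex" where
  "QBB C W G n m p es ds =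
     (if 2 \<le> G then infsum (\<lambda>a. om C W (G - 2) (n + 2) m (a # (p - a) # es) ds) UNIV else 0)
   + (if 1 \<le> G then (1/2) * Qc C 0 * of_int (p + 1) * om C W (G - 1) (n + 1) m ((p + 1) # es) ds
      else 0)
   + (\<Sum>G1\<in>{0..G}. \<Sum>S\<in>Pow {..<n}. \<Sum>T\<in>{T. T \<subseteq> {..<2 * m} \<and> even (card T)}.
        shuffle_sign T (2 * m) *
        infsum (\<lambda>a. om C W G1 (card S + 1) (card T div 2) (a # nths es S) (nths ds T)
                   * om C W (G - G1) (n - card S + 1) (m - card T div 2)
                        ((p - a) # nths es (- S)) (nths ds (- T))) UNIV)"

text \<open>Q^FF_{g,n+1|2m}(z,I|J): coefficient of z^p dz^2, using D_z (h Theta_z) = h' dz Theta_z and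
  Theta^F_z Theta^F_z = z^{1-2f} dz.\<close>
definition QFF :: "curve \<Rightarrow> family \<Rightarrow> nat \<Rightarrow> nat \<Rightarrow> nat \<Rightarrow> int \<Rightarrow> int list \<Rightarrow> int list \<Rightarrow> complex" where
  "QFF C W G n m p es ds =
     (if 2 \<le> G then - (1/2) *
        infsum (\<lambda>a. of_int a * om C W (G - 2) n (m + 1) es (a # (p + 1 - cf C - a) # ds)) UNIV
      else 0)
   + (1/2) * (\<Sum>G1\<in>{0..G}. \<Sum>S\<in>Pow {..<n}. \<Sum>T\<in>{T. T \<subseteq> {..<2 * m} \<and> odd (card T)}.
        shuffle_sign T (2 * m) *
        infsum (\<lambda>a. of_int a * om C W G1 (card S) ((card T + 1) div 2) (nths es S) (a # nths ds T)
                   * om C W (G - G1) (n - card S) ((2 * m - card T + 1) div 2)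
                        (nths es (- S)) ((p + 1 - cf C - a) # nths ds (- T))) UNIV)"

text \<open>Q^BF_{g,n|2m}(I|z,J) (J has 2m-1 entries): coefficient of z^p dz Theta_z.\<close>
definition QBF :: "curve \<Rightarrow> family \<Rightarrow> nat \<Rightarrow> nat \<Rightarrow> nat \<Rightarrow> int \<Rightarrow> int list \<Rightarrow> int list \<Rightarrow> complex" where
  "QBF C W G n m p es ds =
     (if 2 \<le> G then infsum (\<lambda>a. om C W (G - 2) (n + 1) m (a # es) ((p - a) # ds)) UNIV else 0)
   + (if 1 \<le> G then Qc C 0 * (of_int (p + 1) + of_int (cf C) / 2) * om C W (G - 1) n m es ((p + 1) # ds)
      else 0)
   + (\<Sum>G1\<in>{0..G}. \<Sum>S\<in>Pow {..<n}. \<Sum>T\<in>{T. T \<subseteq> {..<2 * m - 1} \<and> even (card T)}.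
        shuffle_sign T (2 * m - 1) *
        infsum (\<lambda>a. om C W G1 (card S + 1) (card T div 2) (a # nths es S) (nths ds T)
                   * om C W (G - G1) (n - card S) (m - card T div 2)
                        (nths es (- S)) ((p - a) # nths ds (- T))) UNIV)"

text \<open>Abstract super loop equations: no coefficients of z^p with p < -N-1.\<close>
definition loop_eqs :: "curve \<Rightarrow> family \<Rightarrow> bool" where
  "loop_eqs C W \<longleftrightarrow>
     (\<forall>G n m. 2 \<le> G + n + 2 * m \<and> (G, n, m) \<noteq> (2, 0, 0) \<longrightarrow>
        (\<forall>p es ds. p < - int (NN C) - 1 \<and> length es = n \<and> length ds = 2 * m \<longrightarrow>
           QBB C W G n m p es ds + QFF C W G n m p es ds = 0))
   \<and> (\<forall>G n m. 3 \<le> G + n + 2 * m \<and> 1 \<le> m \<longrightarrow>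
        (\<forall>p es ds. p < - int (NN C) - 1 \<and> length es = n \<and> length ds = 2 * m - 1 \<longrightarrow>
           QBF C W G n m p es ds = 0))"

definition agree_at :: "family \<Rightarrow> family \<Rightarrow> nat \<Rightarrow> nat \<Rightarrow> nat \<Rightarrow> bool" where
  "agree_at W W' G n m \<longleftrightarrow>
     (\<forall>ls js. length ls = n \<and> length js = 2 * m \<longrightarrow> W G n m ls js = W' G n m ls js)"

end

theory Submission
  imports Defs
begin


lemma dxi_low:
  assumes "1 \<le> NN C" "1 - int (NN C) \<le> l" "e < - int (NN C)"
  shows "dxi C l e = 0"
  using assms unfolding dxi_def dxi_neg_def by auto

lemma dxi_N:
  assumes "1 \<le> NN C" "1 - int (NN C) \<le> l"
  shows "dxi C l (- int (NN C)) = (if l = 1 - int (NN C) then 1 else 0)"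
  using assms unfolding dxi_def dxi_neg_def by auto

lemma om01_low:
  assumes "1 \<le> NN C" "e < - int (NN C)"
  shows "om01 C e = 0"
  unfolding om01_def by (rule infsum_0) (use assms dxi_low in auto)

lemma om01_N:
  assumes "1 \<le> NN C"
  shows "om01 C (- int (NN C)) = tau C (1 - int (NN C))"
proof -
  have "om01 C (- int (NN C)) = infsum (\<lambda>l. tau C l * dxi C l (- int (NN C))) {1 - int (NN C)}"
    unfolding om01_def by (rule infsum_cong_neutral) (use assms dxi_N in auto)
  then show ?thesis using assms dxi_N by simp
qed

lemma dxi_neg_neg:
  "dxi_neg C l' (- int l - 2) = (if l' = l then 1 else 0)"
  unfolding dxi_neg_def by auto

lemma eta_neg_self: "eta_neg C j (- int j - 1) = 1"
  unfolding eta_neg_def by auto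

lemma eta_neg_nz:
  assumes "eta_neg C j' (- int j - 1) \<noteq> 0"
  shows "j' = j \<or> (j = 0 \<and> j' \<noteq> 0)"
  using assms unfolding eta_neg_def by (auto split: if_splits)

lemma eta_neg_low:
  assumes "d \<le> -2"
  shows "eta_neg C j d = (if d = - int j - 1 then 1 else 0)"
  using assms unfolding eta_neg_def by auto

lemma conv_dxi:
  assumes "1 \<le> NN C" "p < - int (NN C) - 1" "y + z = p"
  shows "om01 C y * dxi_neg C l z = (if z = - int l - 2 then om01 C (p + int l + 2) else 0)"
proof (cases "y < - int (NN C)")
  case True then show ?thesis using om01_low[OF assms(1) True] assms by auto
next
  case False then show ?thesis using assms unfolding dxi_neg_def by auto
qed

lemma conv_eta:
  assumes "1 \<le> NN C" "p < - int (NN C) - 1" "y + z = p"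
  shows "om01 C y * eta_neg C j z = (if z = - int j - 1 then om01 C (p + int j + 1) else 0)"
proof (cases "y < - int (NN C)")
  case True then show ?thesis using om01_low[OF assms(1) True] assms by auto
next
  case False then have "z \<le> -2" using assms by auto
  then show ?thesis using assms eta_neg_low by auto
qed



lemma infsum_fin_sum:
  fixes v :: "'a \<Rightarrow> complex"
  assumes "finite A"
  shows "infsum (\<lambda>x. \<Sum>a\<in>A. (if x = pt a then v a else 0)) UNIV = (\<Sum>a\<in>A. v a)"
proof -
  have "infsum (\<lambda>x. \<Sum>a\<in>A. (if x = pt a then v a else 0)) UNIV
      = infsum (\<lambda>x. \<Sum>a\<in>A. (if x = pt a then v a else 0)) (pt ` A)"
    by (rule infsum_cong_neutral) (auto intro!: sum.neutral)
  also have "\<dots> = (\<Sum>x\<in>pt ` A. \<Sum>a\<in>A. (if x = pt a then v a else 0))"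
    using assms by simp
  also have "\<dots> = (\<Sum>a\<in>A. \<Sum>x\<in>pt ` A. (if x = pt a then v a else 0))"
    by (rule sum.swap)
  also have "\<dots> = (\<Sum>a\<in>A. v a)"
    using assms by (intro sum.cong refl) (simp add: sum.delta)
  finally show ?thesis .
qed

definition tailB :: "curve \<Rightarrow> nat \<Rightarrow> nat \<Rightarrow> nat list \<Rightarrow> nat list \<Rightarrow> int list \<Rightarrow> int list \<Rightarrow> complex" where
  "tailB C n m ls js es ds = (\<Prod>k<n. dxi_neg C (ls ! Suc k) (es ! k)) * (\<Prod>k<2 * m. eta_neg C (js ! k) (ds ! k))"

lemma conv_BB1:
  assumes "1 \<le> NN C" "p < - int (NN C) - 1" "unknown_index G (Suc n) m"
    and fin: "finite (supp W G (Suc n) m)"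
  shows "infsum (\<lambda>x. om01 C x * om C W G (Suc n) m ((p - x) # es) ds) UNIV
    = (\<Sum>(ls,js)\<in>supp W G (Suc n) m. W G (Suc n) m ls js * (om01 C (p + int (ls!0) + 2) * tailB C n m ls js es ds))"
proof -
  have "(\<lambda>x. om01 C x * om C W G (Suc n) m ((p - x) # es) ds) =
     (\<lambda>x. \<Sum>a\<in>supp W G (Suc n) m. (if x = (\<lambda>(ls,js). p + int (ls!0) + 2) a then
         (\<lambda>(ls,js). W G (Suc n) m ls js * (om01 C (p + int (ls!0) + 2) * tailB C n m ls js es ds)) a else 0))"
  proof
    fix x
    show "om01 C x * om C W G (Suc n) m ((p - x) # es) ds = (\<Sum>a\<in>supp W G (Suc n) m. (if x = (\<lambda>(ls,js). p + int (ls!0) + 2) a then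
         (\<lambda>(ls,js). W G (Suc n) m ls js * (om01 C (p + int (ls!0) + 2) * tailB C n m ls js es ds)) a else 0))"
      unfolding om_def using assms(3)
      apply (simp del: prod.lessThan_Suc add: sum_distrib_left)
      apply (rule sum.cong, rule refl)
      apply clarify
    proof -
      fix ls js
      have c: "om01 C x * dxi_neg C (ls ! 0) (p - x) = (if x = p + int (ls!0) + 2 then om01 C (p + int (ls!0) + 2) else 0)"
        using conv_dxi[OF assms(1,2), of x "p - x" "ls ! 0"] by auto
      have e: "om01 C x * (W G (Suc n) m ls js * (\<Prod>k<Suc n. dxi_neg C (ls ! k) (((p - x) # es) ! k)) *
          (\<Prod>k<2 * m. eta_neg C (js ! k) (ds ! k))) = W G (Suc n) m ls js * (om01 C x * dxi_neg C (ls ! 0) (p - x)) * tailB C n m ls js es ds"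
        unfolding tailB_def by (simp del: prod.lessThan_Suc add: prod.lessThan_Suc_shift ac_simps)
      show "om01 C x * (W G (Suc n) m ls js * (\<Prod>k<Suc n. dxi_neg C (ls ! k) (((p - x) # es) ! k)) *
          (\<Prod>k<2 * m. eta_neg C (js ! k) (ds ! k))) =
         (if x = p + int (ls ! 0) + 2
          then W G (Suc n) m ls js * (om01 C (p + int (ls ! 0) + 2) * tailB C n m ls js es ds)
          else 0)"
        unfolding e c by simp
    qed
  qed
  then show ?thesis by (simp only: infsum_fin_sum[OF fin])
qed


lemma conv_BB2:
  assumes "1 \<le> NN C" "p < - int (NN C) - 1" "unknown_index G (Suc n) m"
    and fin: "finite (supp W G (Suc n) m)"
  shows "infsum (\<lambda>x. om C W G (Suc n) m (x # es) ds * om01 C (p - x)) UNIV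
    = (\<Sum>(ls,js)\<in>supp W G (Suc n) m. W G (Suc n) m ls js * (om01 C (p + int (ls!0) + 2) * tailB C n m ls js es ds))"
proof -
  have "(\<lambda>x. om C W G (Suc n) m (x # es) ds * om01 C (p - x)) =
     (\<lambda>x. \<Sum>a\<in>supp W G (Suc n) m. (if x = (\<lambda>(ls,js). - int (ls!0) - 2) a then
         (\<lambda>(ls,js). W G (Suc n) m ls js * (om01 C (p + int (ls!0) + 2) * tailB C n m ls js es ds)) a else 0))"
  proof
    fix x
    show "om C W G (Suc n) m (x # es) ds * om01 C (p - x) = (\<Sum>a\<in>supp W G (Suc n) m. (if x = (\<lambda>(ls,js). - int (ls!0) - 2) a then
         (\<lambda>(ls,js). W G (Suc n) m ls js * (om01 C (p + int (ls!0) + 2) * tailB C n m ls js es ds)) a else 0))"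
      unfolding om_def using assms(3)
      apply (simp del: prod.lessThan_Suc add: sum_distrib_right)
      apply (rule sum.cong, rule refl)
      apply clarify
    proof -
      fix ls js
      have c: "om01 C (p - x) * dxi_neg C (ls ! 0) x = (if x = - int (ls!0) - 2 then om01 C (p + int (ls!0) + 2) else 0)"
        using conv_dxi[OF assms(1,2), of "p - x" x "ls ! 0"] by auto
      have e: "W G (Suc n) m ls js * (\<Prod>k<Suc n. dxi_neg C (ls ! k) ((x # es) ! k)) *
          (\<Prod>k<2 * m. eta_neg C (js ! k) (ds ! k)) * om01 C (p - x) = W G (Suc n) m ls js * (om01 C (p - x) * dxi_neg C (ls ! 0) x) * tailB C n m ls js es ds"
        unfolding tailB_def by (simp del: prod.lessThan_Suc add: prod.lessThan_Suc_shift ac_simps)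
      show "W G (Suc n) m ls js * (\<Prod>k<Suc n. dxi_neg C (ls ! k) ((x # es) ! k)) *
          (\<Prod>k<2 * m. eta_neg C (js ! k) (ds ! k)) * om01 C (p - x) =
         (if x = - int (ls ! 0) - 2
          then W G (Suc n) m ls js * (om01 C (p + int (ls ! 0) + 2) * tailB C n m ls js es ds)
          else 0)"
        unfolding e c by simp
    qed
  qed
  then show ?thesis by (simp only: infsum_fin_sum[OF fin])
qed

definition tailF :: "curve \<Rightarrow> nat \<Rightarrow> nat \<Rightarrow> nat list \<Rightarrow> nat list \<Rightarrow> int list \<Rightarrow> int list \<Rightarrow> complex" where
  "tailF C n m ls js es ds = (\<Prod>k<n. dxi_neg C (ls ! k) (es ! k)) * (\<Prod>k<2 * m - 1. eta_neg C (js ! Suc k) (ds ! k))"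

lemma conv_BF:
  assumes "1 \<le> NN C" "p < - int (NN C) - 1" "unknown_index G n m" "1 \<le> m"
    and fin: "finite (supp W G n m)"
  shows "infsum (\<lambda>x. om01 C x * om C W G n m es ((p - x) # ds)) UNIV
    = (\<Sum>(ls,js)\<in>supp W G n m. W G n m ls js * (om01 C (p + int (js!0) + 1) * tailF C n m ls js es ds))"
proof -
  obtain m2 where m2: "2 * m = Suc m2" using assms(4) by (metis Suc_pred mult_pos_pos zero_less_numeral less_le_trans zero_less_one)
  have m2': "2 * m - 1 = m2" using m2 by simp
  have "(\<lambda>x. om01 C x * om C W G n m es ((p - x) # ds)) =
     (\<lambda>x. \<Sum>a\<in>supp W G n m. (if x = (\<lambda>(ls,js). p + int (js!0) + 1) a then
         (\<lambda>(ls,js). W G n m ls js * (om01 C (p + int (js!0) + 1) * tailF C n m ls js es ds)) a else 0))"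
  proof
    fix x
    show "om01 C x * om C W G n m es ((p - x) # ds) = (\<Sum>a\<in>supp W G n m. (if x = (\<lambda>(ls,js). p + int (js!0) + 1) a then
         (\<lambda>(ls,js). W G n m ls js * (om01 C (p + int (js!0) + 1) * tailF C n m ls js es ds)) a else 0))"
      unfolding om_def using assms(3)
      apply (simp del: prod.lessThan_Suc add: sum_distrib_left)
      apply (rule sum.cong, rule refl)
      apply clarify
    proof -
      fix ls js
      have c: "om01 C x * eta_neg C (js ! 0) (p - x) = (if x = p + int (js!0) + 1 then om01 C (p + int (js!0) + 1) else 0)"
        using conv_eta[OF assms(1,2), of x "p - x" "js ! 0"] by auto
      have e: "om01 C x * (W G n m ls js * (\<Prod>k<n. dxi_neg C (ls ! k) (es ! k)) *
          (\<Prod>k<2 * m. eta_neg C (js ! k) (((p - x) # ds) ! k))) = W G n m ls js * (om01 C x * eta_neg C (js ! 0) (p - x)) * tailF C n m ls js es ds"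
        unfolding tailF_def m2 m2' by (simp del: prod.lessThan_Suc add: prod.lessThan_Suc_shift ac_simps)
      show "om01 C x * (W G n m ls js * (\<Prod>k<n. dxi_neg C (ls ! k) (es ! k)) *
          (\<Prod>k<2 * m. eta_neg C (js ! k) (((p - x) # ds) ! k))) =
         (if x = p + int (js ! 0) + 1
          then W G n m ls js * (om01 C (p + int (js ! 0) + 1) * tailF C n m ls js es ds)
          else 0)"
        unfolding e c by simp
    qed
  qed
  then show ?thesis by (simp only: infsum_fin_sum[OF fin])
qed



lemma triang:
  fixes c :: "'a \<Rightarrow> complex" and B :: "'t \<Rightarrow> 'a \<Rightarrow> complex" and w :: "'a \<Rightarrow> nat"
  assumes fin: "finite A"
    and eq: "\<And>t. Q t \<Longrightarrow> (\<Sum>a\<in>A. c a * B t a) = 0"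
    and Qx: "\<And>a. a \<in> A \<Longrightarrow> P a \<Longrightarrow> Q (x a)"
    and diag: "\<And>a. a \<in> A \<Longrightarrow> P a \<Longrightarrow> B (x a) a \<noteq> 0"
    and tri: "\<And>a a'. a \<in> A \<Longrightarrow> a' \<in> A \<Longrightarrow> P a \<Longrightarrow> a' \<noteq> a \<Longrightarrow> B (x a) a' \<noteq> 0 \<Longrightarrow> P a' \<and> w a < w a'"
  shows "\<forall>a\<in>A. P a \<longrightarrow> c a = 0"
proof (rule ccontr)
  assume nt: "\<not> (\<forall>a\<in>A. P a \<longrightarrow> c a = 0)"
  define S where "S = {a\<in>A. P a \<and> c a \<noteq> 0}"
  have Sne: "S \<noteq> {}" and Sfin: "finite S" using nt fin unfolding S_def by auto
  obtain a where aS: "a \<in> S" and amax: "\<And>b. b \<in> S \<Longrightarrow> w b \<le> w a"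
  proof -
    have "Max (w ` S) \<in> w ` S" using Sne Sfin by simp
    then obtain a where "a \<in> S" "w a = Max (w ` S)" by auto
    then show ?thesis using that Sfin by simp
  qed
  have aA: "a \<in> A" "P a" "c a \<noteq> 0" using aS unfolding S_def by auto
  have "(\<Sum>b\<in>A. c b * B (x a) b) = c a * B (x a) a + (\<Sum>b\<in>A - {a}. c b * B (x a) b)"
    using fin aA by (simp add: sum.remove)
  also have "(\<Sum>b\<in>A - {a}. c b * B (x a) b) = 0"
  proof (rule sum.neutral, rule ballI)
    fix b assume b: "b \<in> A - {a}"
    show "c b * B (x a) b = 0"
    proof (cases "B (x a) b = 0")
      case False
      then have "P b \<and> w a < w b" using tri[OF aA(1) _ aA(2)] b by auto
      then have "b \<notin> S" using amax by fastforce
      then have "c b = 0" using b \<open>P b \<and> w a < w b\<close> unfolding S_def by auto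
      then show ?thesis by simp
    qed simp
  qed
  finally have "(\<Sum>b\<in>A. c b * B (x a) b) = c a * B (x a) a" by simp
  moreover have "(\<Sum>b\<in>A. c b * B (x a) b) = 0" using eq Qx aA by blast
  ultimately show False using aA diag by simp
qed

lemma supp_extend:
  assumes "finite A" "supp W G n m \<subseteq> A" "A \<subseteq> {(ls, js). length ls = n \<and> length js = 2 * m}"
  shows "(\<Sum>(ls,js)\<in>supp W G n m. W G n m ls js * h ls js) = (\<Sum>(ls,js)\<in>A. W G n m ls js * h ls js)"
  by (rule sum.mono_neutral_left) (use assms in \<open>auto simp: supp_def\<close>)

lemma sum_diff_supp:
  assumes "finite (supp W G n m)" "finite (supp W' G n m)"
  shows "(\<Sum>(ls,js)\<in>supp W G n m. W G n m ls js * h ls js) - (\<Sum>(ls,js)\<in>supp W' G n m. W' G n m ls js * h ls js)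
     = (\<Sum>(ls,js)\<in>supp W G n m \<union> supp W' G n m. (W G n m ls js - W' G n m ls js) * h ls js)"
proof -
  let ?A = "supp W G n m \<union> supp W' G n m"
  have A: "?A \<subseteq> {(ls, js). length ls = n \<and> length js = 2 * m}" by (auto simp: supp_def)
  show ?thesis
    using supp_extend[of ?A W G n m h] supp_extend[of ?A W' G n m h] assms A
    by (simp add: sum_subtractf[symmetric] case_prod_unfold left_diff_distrib)
qed



lemma om01_shift_nz:
  assumes "1 \<le> NN C" "om01 C (int l' - int l - int (NN C)) \<noteq> 0"
  shows "l \<le> l'"
  using om01_low[OF assms(1), of "int l' - int l - int (NN C)"] assms by (cases "l \<le> l'") auto

lemma om01_shift_self:
  assumes "1 \<le> NN C"
  shows "om01 C (int l - int l - int (NN C)) = tau C (1 - int (NN C))"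
  using om01_N[OF assms] by simp

definition wF :: "nat \<Rightarrow> nat" where "wF j = (if j = 0 then 0 else 1)"

lemma wF_mono: "j' = j \<or> (j = 0 \<and> j' \<noteq> 0) \<Longrightarrow> wF j \<le> wF j'"
  unfolding wF_def by auto

lemma wF_strict: "j' = j \<or> (j = 0 \<and> j' \<noteq> 0) \<Longrightarrow> j' \<noteq> j \<Longrightarrow> wF j < wF j'"
  unfolding wF_def by auto

lemma indep_BB:
  assumes N1: "1 \<le> NN C" and tau: "tau C (1 - int (NN C)) \<noteq> 0"
    and fin: "finite A" and Asub: "A \<subseteq> {(ls, js). length ls = Suc n \<and> length js = 2 * m}"
    and eq: "\<And>p es ds. p < - int (NN C) - 1 \<Longrightarrow> length es = n \<Longrightarrow> length ds = 2 * m \<Longrightarrow>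
        (\<Sum>(ls,js)\<in>A. c ls js * (om01 C (p + int (ls!0) + 2) * tailB C n m ls js es ds)) = 0"
  shows "\<forall>(ls,js)\<in>A. c ls js = 0"
proof -
  define B where "B = (\<lambda>(t::int \<times> int list \<times> int list) (a::nat list \<times> nat list).
     om01 C (fst t + int (fst a ! 0) + 2) * tailB C n m (fst a) (snd a) (fst (snd t)) (snd (snd t)))"
  define Q where "Q = (\<lambda>(t::int \<times> int list \<times> int list). fst t < - int (NN C) - 1 \<and> length (fst (snd t)) = n \<and> length (snd (snd t)) = 2 * m)"
  define x where "x = (\<lambda>(a::nat list \<times> nat list). (- int (NN C) - 2 - int (fst a ! 0),
      map (\<lambda>l. - int l - 2) (tl (fst a)), map (\<lambda>j. - int j - 1) (snd a)))"
  define w where "w = (\<lambda>(a::nat list \<times> nat list). fst a ! 0 + (\<Sum>k<2 * m. wF (snd a ! k)))"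
  have Bx: "B (x (ls, js)) (ls', js') = om01 C (int (ls' ! 0) - int (ls ! 0) - int (NN C)) *
      ((\<Prod>k<n. dxi_neg C (ls' ! Suc k) (- int (ls ! Suc k) - 2)) * (\<Prod>k<2 * m. eta_neg C (js' ! k) (- int (js ! k) - 1)))"
    if "length ls = Suc n" "length js = 2 * m" for ls js ls' js'
    using that unfolding B_def x_def tailB_def by (simp add: nth_tl algebra_simps)
  have "\<forall>a\<in>A. True \<longrightarrow> case_prod c a = 0"
  proof (rule triang[where B = B and Q = Q and x = x and w = w and P = "\<lambda>_. True"])
    show "finite A" by fact
    show "Q t \<Longrightarrow> (\<Sum>a\<in>A. case_prod c a * B t a) = 0" for t
      using eq[of "fst t" "fst (snd t)" "snd (snd t)"] unfolding Q_def B_def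
      by (simp add: case_prod_unfold)
    show "Q (x a)" if "a \<in> A" for a
      using that Asub unfolding Q_def x_def by auto
    show "B (x a) a \<noteq> 0" if "a \<in> A" for a
    proof -
      obtain ls js where a: "a = (ls, js)" by force
      have l: "length ls = Suc n" "length js = 2 * m" using that a Asub by auto
      show ?thesis using Bx[OF l, of ls js] om01_shift_self[OF N1, of "ls ! 0"] tau
        by (simp add: a dxi_neg_neg eta_neg_self)
    qed
    show "True \<and> w a < w a'" if "a \<in> A" "a' \<in> A" "a' \<noteq> a" "B (x a) a' \<noteq> 0" for a a'
    proof -
      obtain ls js where a: "a = (ls, js)" by force
      obtain ls' js' where a': "a' = (ls', js')" by force
      have l: "length ls = Suc n" "length js = 2 * m" using that a Asub by auto
      have l': "length ls' = Suc n" "length js' = 2 * m" using that a' Asub by auto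
      have nz: "om01 C (int (ls' ! 0) - int (ls ! 0) - int (NN C)) \<noteq> 0"
        "\<And>k. k < n \<Longrightarrow> dxi_neg C (ls' ! Suc k) (- int (ls ! Suc k) - 2) \<noteq> 0"
        "\<And>k. k < 2 * m \<Longrightarrow> eta_neg C (js' ! k) (- int (js ! k) - 1) \<noteq> 0"
        using that(4) unfolding a a' Bx[OF l] by auto
      have h0: "ls ! 0 \<le> ls' ! 0" using om01_shift_nz[OF N1 nz(1)] .
      have hs: "ls' ! Suc k = ls ! Suc k" if "k < n" for k using nz(2)[OF that] dxi_neg_neg[of C] by (auto split: if_splits)
      have hf: "js' ! k = js ! k \<or> (js ! k = 0 \<and> js' ! k \<noteq> 0)" if "k < 2 * m" for k using eta_neg_nz[OF nz(3)[OF that]] .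
      have fm: "(\<Sum>k<2 * m. wF (js ! k)) \<le> (\<Sum>k<2 * m. wF (js' ! k))"
        by (rule sum_mono) (use hf wF_mono in auto)
      show ?thesis
      proof (cases "ls' = ls")
        case True
        then have "js' \<noteq> js" using that(3) a a' by auto
        then obtain k where k: "k < 2 * m" "js' ! k \<noteq> js ! k" using l l' nth_equalityI by metis
        have "(\<Sum>k<2 * m. wF (js ! k)) < (\<Sum>k<2 * m. wF (js' ! k))"
          using hf wF_mono wF_strict[OF hf[OF k(1)] k(2)] k(1) by (intro sum_strict_mono_ex1) auto
        then show ?thesis using True unfolding w_def a a' by simp
      next
        case False
        have "ls' ! 0 \<noteq> ls ! 0"
        proof
          assume h: "ls' ! 0 = ls ! 0"
          have "ls' = ls"
          proof (rule nth_equalityI)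
            show "length ls' = length ls" using l l' by simp
            fix i assume "i < length ls'"
            then show "ls' ! i = ls ! i" using h hs l' by (cases i) auto
          qed
          then show False using False by simp
        qed
        then show ?thesis using h0 fm unfolding w_def a a' by simp
      qed
    qed
  qed
  then show ?thesis by auto
qed


lemma indep_BF:
  assumes N1: "1 \<le> NN C" and tau: "tau C (1 - int (NN C)) \<noteq> 0" and m1: "1 \<le> m"
    and fin: "finite A" and Asub: "A \<subseteq> {(ls, js). length ls = n \<and> length js = 2 * m}"
    and eq: "\<And>p es ds. p < - int (NN C) - 1 \<Longrightarrow> length es = n \<Longrightarrow> length ds = 2 * m - 1 \<Longrightarrow>
        (\<Sum>(ls,js)\<in>A. c ls js * (om01 C (p + int (js!0) + 1) * tailF C n m ls js es ds)) = 0"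
  shows "\<forall>(ls,js)\<in>A. 1 \<le> js ! 0 \<longrightarrow> c ls js = 0"
proof -
  define B where "B = (\<lambda>(t::int \<times> int list \<times> int list) (a::nat list \<times> nat list).
     om01 C (fst t + int (snd a ! 0) + 1) * tailF C n m (fst a) (snd a) (fst (snd t)) (snd (snd t)))"
  define Q where "Q = (\<lambda>(t::int \<times> int list \<times> int list). fst t < - int (NN C) - 1 \<and> length (fst (snd t)) = n \<and> length (snd (snd t)) = 2 * m - 1)"
  define x where "x = (\<lambda>(a::nat list \<times> nat list). (- int (NN C) - 1 - int (snd a ! 0),
      map (\<lambda>l. - int l - 2) (fst a), map (\<lambda>j. - int j - 1) (tl (snd a))))"
  define w where "w = (\<lambda>(a::nat list \<times> nat list). snd a ! 0 + (\<Sum>k<2 * m - 1. wF (snd a ! Suc k)))"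
  define P where "P = (\<lambda>(a::nat list \<times> nat list). 1 \<le> snd a ! 0)"
  have Bx: "B (x (ls, js)) (ls', js') = om01 C (int (js' ! 0) - int (js ! 0) - int (NN C)) *
      ((\<Prod>k<n. dxi_neg C (ls' ! k) (- int (ls ! k) - 2)) * (\<Prod>k<2 * m - 1. eta_neg C (js' ! Suc k) (- int (js ! Suc k) - 1)))"
    if "length ls = n" "length js = 2 * m" for ls js ls' js'
    using that m1 unfolding B_def x_def tailF_def by (simp add: nth_tl algebra_simps)
  have "\<forall>a\<in>A. P a \<longrightarrow> case_prod c a = 0"
  proof (rule triang[where B = B and Q = Q and x = x and w = w and P = P])
    show "finite A" by fact
    show "Q t \<Longrightarrow> (\<Sum>a\<in>A. case_prod c a * B t a) = 0" for t
      using eq[of "fst t" "fst (snd t)" "snd (snd t)"] unfolding Q_def B_def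
      by (simp add: case_prod_unfold)
    show "Q (x a)" if "a \<in> A" "P a" for a
      using that Asub unfolding Q_def x_def P_def by auto
    show "B (x a) a \<noteq> 0" if "a \<in> A" "P a" for a
    proof -
      obtain ls js where a: "a = (ls, js)" by force
      have l: "length ls = n" "length js = 2 * m" using that a Asub by auto
      show ?thesis using Bx[OF l, of ls js] om01_shift_self[OF N1, of "js ! 0"] tau
        by (simp add: a dxi_neg_neg eta_neg_self)
    qed
    show "P a' \<and> w a < w a'" if "a \<in> A" "a' \<in> A" "P a" "a' \<noteq> a" "B (x a) a' \<noteq> 0" for a a'
    proof -
      obtain ls js where a: "a = (ls, js)" by force
      obtain ls' js' where a': "a' = (ls', js')" by force
      have l: "length ls = n" "length js = 2 * m" using that a Asub by auto
      have l': "length ls' = n" "length js' = 2 * m" using that a' Asub by auto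
      have nz: "om01 C (int (js' ! 0) - int (js ! 0) - int (NN C)) \<noteq> 0"
        "\<And>k. k < n \<Longrightarrow> dxi_neg C (ls' ! k) (- int (ls ! k) - 2) \<noteq> 0"
        "\<And>k. k < 2 * m - 1 \<Longrightarrow> eta_neg C (js' ! Suc k) (- int (js ! Suc k) - 1) \<noteq> 0"
        using that(5) unfolding a a' Bx[OF l] by auto
      have h0: "js ! 0 \<le> js' ! 0" using om01_shift_nz[OF N1 nz(1)] .
      have hs: "ls' ! k = ls ! k" if "k < n" for k using nz(2)[OF that] dxi_neg_neg[of C] by (auto split: if_splits)
      have hf: "js' ! Suc k = js ! Suc k \<or> (js ! Suc k = 0 \<and> js' ! Suc k \<noteq> 0)" if "k < 2 * m - 1" for k
        using eta_neg_nz[OF nz(3)[OF that]] .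
      have fm: "(\<Sum>k<2 * m - 1. wF (js ! Suc k)) \<le> (\<Sum>k<2 * m - 1. wF (js' ! Suc k))"
        by (rule sum_mono) (use hf wF_mono in auto)
      have Pa': "P a'" using h0 that(3) unfolding P_def a a' by simp
      have lseq: "ls' = ls" using l l' hs by (metis nth_equalityI)
      then have "js' \<noteq> js" using that(4) a a' by auto
      show ?thesis
      proof (cases "js' ! 0 = js ! 0")
        case True
        have "\<exists>k<2 * m - 1. js' ! Suc k \<noteq> js ! Suc k"
        proof (rule ccontr)
          assume "\<not> ?thesis"
          then have all: "\<And>k. k < 2 * m - 1 \<Longrightarrow> js' ! Suc k = js ! Suc k" by blast
          have "js' = js"
          proof (rule nth_equalityI)
            show "length js' = length js" using l l' by simp
            fix i assume i: "i < length js'"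
            show "js' ! i = js ! i"
            proof (cases i)
              case 0 then show ?thesis using True by simp
            next
              case (Suc k) then have "k < 2 * m - 1" using i l' by simp
              then show ?thesis using all Suc by simp
            qed
          qed
          then show False using \<open>js' \<noteq> js\<close> by simp
        qed
        then obtain k where k: "k < 2 * m - 1" "js' ! Suc k \<noteq> js ! Suc k" by blast
        have "(\<Sum>k<2 * m - 1. wF (js ! Suc k)) < (\<Sum>k<2 * m - 1. wF (js' ! Suc k))"
          using hf wF_mono wF_strict[OF hf[OF k(1)] k(2)] k(1) by (intro sum_strict_mono_ex1) auto
        then show ?thesis using True Pa' unfolding w_def a a' by simp
      next
        case False
        then show ?thesis using h0 fm Pa' unfolding w_def a a' by simp
      qed
    qed
  qed
  then show ?thesis unfolding P_def by auto
qed



definition lowagree :: "family \<Rightarrow> family \<Rightarrow> nat \<Rightarrow> bool" where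
  "lowagree W W' L \<longleftrightarrow> (\<forall>G n m. unknown_index G n m \<and> 1 \<le> n + m \<and> G + n + 2 * m < L \<longrightarrow> agree_at W W' G n m)"

lemma om_agree:
  assumes "unknown_index G n m \<longrightarrow> agree_at W W' G n m"
  shows "om C W G n m = om C W' G n m"
proof (intro ext)
  fix es ds
  show "om C W G n m es ds = om C W' G n m es ds"
  proof (cases "unknown_index G n m")
    case True
    then have ag: "agree_at W W' G n m" using assms by simp
    then have s: "supp W G n m = supp W' G n m" unfolding supp_def agree_at_def by auto
    show ?thesis unfolding om_def s using True ag
      by (auto intro!: sum.cong simp: supp_def agree_at_def)
  next
    case False then show ?thesis unfolding om_def by simp
  qed
qed

lemma om_low:
  assumes "lowagree W W' L" "G + n + 2 * m < L" "1 \<le> n + m"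
  shows "om C W G n m = om C W' G n m"
  using assms unfolding lowagree_def by (intro om_agree) auto

lemma QFF_eq:
  assumes low: "lowagree W W' (G + (n + 1) + 2 * m)"
  shows "QFF C W G n m p es ds = QFF C W' G n m p es ds"
proof -
  have e1: "2 \<le> G \<Longrightarrow> om C W (G - 2) n (m + 1) = om C W' (G - 2) n (m + 1)"
    by (rule om_low[OF low]) auto
  have e2: "om C W G1 (card S) ((card T + 1) div 2) = om C W' G1 (card S) ((card T + 1) div 2)
          \<and> om C W (G - G1) (n - card S) ((2 * m - card T + 1) div 2) = om C W' (G - G1) (n - card S) ((2 * m - card T + 1) div 2)"
    if "G1 \<in> {0..G}" "S \<in> Pow {..<n}" "T \<in> {T. T \<subseteq> {..<2 * m} \<and> odd (card T)}" for G1 S T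
  proof -
    have cS: "card S \<le> n" using that(2) by (metis PowD card_lessThan card_mono finite_lessThan)
    have cT: "card T \<le> 2 * m" using that(3) by (metis (no_types, lifting) card_lessThan card_mono finite_lessThan mem_Collect_eq)
    have oT: "odd (card T)" using that(3) by simp
    have G1: "G1 \<le> G" using that(1) by simp
    have a: "G1 + card S + 2 * ((card T + 1) div 2) < G + (n + 1) + 2 * m"
      using cS cT oT G1 by presburger
    have b: "G - G1 + (n - card S) + 2 * ((2 * m - card T + 1) div 2) < G + (n + 1) + 2 * m"
      using cS cT oT G1 by presburger
    have c: "1 \<le> card S + (card T + 1) div 2" "1 \<le> n - card S + (2 * m - card T + 1) div 2"
      using cS cT oT by presburger+
    show ?thesis using om_low[OF low a c(1)] om_low[OF low b c(2)] by simp
  qed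
  show ?thesis unfolding QFF_def
    apply (rule arg_cong2[where f = "(+)"])
    subgoal using e1 by simp
    subgoal
      apply (rule arg_cong[where f = "\<lambda>x. (1/2) * x"])
      apply (intro sum.cong refl)
      subgoal for G1 S T using e2[of G1 S T] by simp
      done
    done
qed



lemma nested3:
  fixes g :: "'x \<Rightarrow> 'y \<Rightarrow> 'z \<Rightarrow> complex"
  assumes "finite X" "finite Y" "finite Z" "D \<subseteq> X \<times> Y \<times> Z"
    and "\<And>x y z. x \<in> X \<Longrightarrow> y \<in> Y \<Longrightarrow> z \<in> Z \<Longrightarrow> (x, y, z) \<notin> D \<Longrightarrow> g x y z = 0"
  shows "(\<Sum>x\<in>X. \<Sum>y\<in>Y. \<Sum>z\<in>Z. g x y z) = (\<Sum>(x,y,z)\<in>D. g x y z)"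
proof -
  have "(\<Sum>x\<in>X. \<Sum>y\<in>Y. \<Sum>z\<in>Z. g x y z) = (\<Sum>x\<in>X. \<Sum>(y,z)\<in>Y \<times> Z. g x y z)"
    by (simp add: sum.cartesian_product)
  also have "\<dots> = (\<Sum>(x,y,z)\<in>X \<times> (Y \<times> Z). g x y z)"
    by (simp add: sum.cartesian_product case_prod_unfold)
  also have "\<dots> = (\<Sum>(x,y,z)\<in>D. g x y z)"
    by (rule sum.mono_neutral_right) (use assms in \<open>auto intro: finite_subset\<close>)
  finally show ?thesis .
qed

lemma shuffle_sign_empty: "shuffle_sign {} k = 1"
  unfolding shuffle_sign_def by simp

lemma shuffle_sign_all: "shuffle_sign {..<k} k = 1"
proof -
  have e: "{(i, j). i \<in> {..<k} \<and> j < k \<and> j \<notin> {..<k} \<and> j < i} = ({} :: (nat \<times> nat) set)" by auto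
  show ?thesis unfolding shuffle_sign_def by (simp only: e card.empty power_0)
qed

lemma om_010: "om C W 0 (Suc 0) 0 es ds = om01 C (es ! 0)"
  unfolding om_def unknown_index_def by simp



lemma levels_BB:
  assumes G1: "G1 \<le> G" and S: "S \<subseteq> {..<n}" and T: "T \<subseteq> {..<2 * m}" and eT: "even (card T)"
    and ns1: "\<not> (G1 = 0 \<and> S = {} \<and> T = {})" and ns2: "\<not> (G1 = G \<and> S = {..<n} \<and> T = {..<2 * m})"
  shows "G1 + (card S + 1) + 2 * (card T div 2) < G + (n + 1) + 2 * m"
    and "G - G1 + (n - card S + 1) + 2 * (m - card T div 2) < G + (n + 1) + 2 * m"
proof -
  have cS: "card S \<le> n" using S by (metis card_lessThan card_mono finite_lessThan)
  have cT: "card T \<le> 2 * m" using T by (metis card_lessThan card_mono finite_lessThan)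
  have fT: "finite T" using T finite_subset by blast
  have fS: "finite S" using S finite_subset by blast
  have d1: "G1 \<noteq> 0 \<or> card S \<noteq> 0 \<or> card T \<noteq> 0" using ns1 fS fT by auto
  have "S = {..<n}" if "card S = n" using card_subset_eq[OF finite_lessThan S] that by simp
  moreover have "T = {..<2 * m}" if "card T = 2 * m" using card_subset_eq[OF finite_lessThan T] that by simp
  ultimately have d2: "G1 \<noteq> G \<or> card S \<noteq> n \<or> card T \<noteq> 2 * m" using ns2 by auto
  show "G1 + (card S + 1) + 2 * (card T div 2) < G + (n + 1) + 2 * m"
    using d2 cS cT eT G1 by presburger
  show "G - G1 + (n - card S + 1) + 2 * (m - card T div 2) < G + (n + 1) + 2 * m"
    using d1 cS cT eT G1 by presburger
qed

lemma QBB_diff: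
  assumes N1: "1 \<le> NN C" and p: "p < - int (NN C) - 1"
    and low: "lowagree W W' (G + (n + 1) + 2 * m)" and unk: "unknown_index G (Suc n) m"
    and finW: "finite (supp W G (Suc n) m)" and finW': "finite (supp W' G (Suc n) m)"
    and les: "length es = n" and lds: "length ds = 2 * m"
  shows "QBB C W G n m p es ds - QBB C W' G n m p es ds = 2 * (\<Sum>(ls,js)\<in>supp W G (Suc n) m \<union> supp W' G (Suc n) m.
      (W G (Suc n) m ls js - W' G (Suc n) m ls js) * (om01 C (p + int (ls!0) + 2) * tailB C n m ls js es ds))"
proof -
  define fB where "fB V G1 S T = shuffle_sign T (2 * m) *
        infsum (\<lambda>a. om C V G1 (card S + 1) (card T div 2) (a # nths es S) (nths ds T)
                   * om C V (G - G1) (n - card S + 1) (m - card T div 2)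
                        ((p - a) # nths es (- S)) (nths ds (- T))) UNIV" for V G1 S T
  define X where "X V = (if 2 \<le> G then infsum (\<lambda>a. om C V (G - 2) (n + 2) m (a # (p - a) # es) ds) UNIV else 0)
   + (if 1 \<le> G then (1/2) * Qc C 0 * of_int (p + 1) * om C V (G - 1) (n + 1) m ((p + 1) # es) ds
      else 0)" for V
  define Ts where "Ts = {T. T \<subseteq> {..<2 * m} \<and> even (card T)}"
  have QV: "QBB C V G n m p es ds = X V + (\<Sum>G1\<in>{0..G}. \<Sum>S\<in>Pow {..<n}. \<Sum>T\<in>Ts. fB V G1 S T)" for V
    unfolding QBB_def X_def fB_def Ts_def by simp
  have XX: "X W = X W'"
  proof -
    have "2 \<le> G \<Longrightarrow> om C W (G - 2) (n + 2) m = om C W' (G - 2) (n + 2) m"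
      by (rule om_low[OF low]) auto
    moreover have "1 \<le> G \<Longrightarrow> om C W (G - 1) (n + 1) m = om C W' (G - 1) (n + 1) m"
      by (rule om_low[OF low]) auto
    ultimately show ?thesis unfolding X_def by (cases "2 \<le> G"; cases "1 \<le> G") auto
  qed
  define D where "D = {(0::nat, {}::nat set, {}::nat set), (G, {..<n}, {..<2 * m})}"
  have Dsub: "D \<subseteq> {0..G} \<times> Pow {..<n} \<times> Ts" unfolding D_def Ts_def by auto
  have ns: "fB W G1 S T - fB W' G1 S T = 0"
    if "G1 \<in> {0..G}" "S \<in> Pow {..<n}" "T \<in> Ts" "(G1, S, T) \<notin> D" for G1 S T
  proof -
    have h: "G1 \<le> G" "S \<subseteq> {..<n}" "T \<subseteq> {..<2 * m}" "even (card T)"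
      "\<not> (G1 = 0 \<and> S = {} \<and> T = {})" "\<not> (G1 = G \<and> S = {..<n} \<and> T = {..<2 * m})"
      using that unfolding Ts_def D_def by auto
    have "om C W G1 (card S + 1) (card T div 2) = om C W' G1 (card S + 1) (card T div 2)"
      by (rule om_low[OF low levels_BB(1)[OF h]]) simp
    moreover have "om C W (G - G1) (n - card S + 1) (m - card T div 2) = om C W' (G - G1) (n - card S + 1) (m - card T div 2)"
      by (rule om_low[OF low levels_BB(2)[OF h]]) simp
    ultimately show ?thesis unfolding fB_def by simp
  qed
  have Dne: "(0::nat, {}::nat set, {}::nat set) \<noteq> (G, {..<n}, {..<2 * m})"
    using unk lessThan_empty_iff[of n] lessThan_empty_iff[of "2 * m"] unfolding unknown_index_def by auto
  have sumdiff: "(\<Sum>G1\<in>{0..G}. \<Sum>S\<in>Pow {..<n}. \<Sum>T\<in>Ts. fB W G1 S T) - (\<Sum>G1\<in>{0..G}. \<Sum>S\<in>Pow {..<n}. \<Sum>T\<in>Ts. fB W' G1 S T)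
     = (fB W 0 {} {} - fB W' 0 {} {}) + (fB W G {..<n} {..<2 * m} - fB W' G {..<n} {..<2 * m})"
  proof -
    have "(\<Sum>G1\<in>{0..G}. \<Sum>S\<in>Pow {..<n}. \<Sum>T\<in>Ts. fB W G1 S T) - (\<Sum>G1\<in>{0..G}. \<Sum>S\<in>Pow {..<n}. \<Sum>T\<in>Ts. fB W' G1 S T)
       = (\<Sum>G1\<in>{0..G}. \<Sum>S\<in>Pow {..<n}. \<Sum>T\<in>Ts. fB W G1 S T - fB W' G1 S T)"
      by (simp add: sum_subtractf)
    also have "\<dots> = (\<Sum>(G1,S,T)\<in>D. fB W G1 S T - fB W' G1 S T)"
      by (rule nested3) (use Dsub ns in \<open>auto simp: Ts_def\<close>)
    also have "\<dots> = (fB W 0 {} {} - fB W' 0 {} {}) + (fB W G {..<n} {..<2 * m} - fB W' G {..<n} {..<2 * m})"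
      unfolding D_def using Dne by simp
    finally show ?thesis .
  qed
  have f1: "fB V 0 {} {} = infsum (\<lambda>a. om01 C a * om C V G (Suc n) m ((p - a) # es) ds) UNIV" for V
    unfolding fB_def by (simp add: shuffle_sign_empty om_010 nths_all)
  have f2: "fB V G {..<n} {..<2 * m} = infsum (\<lambda>a. om C V G (Suc n) m (a # es) ds * om01 C (p - a)) UNIV" for V
    unfolding fB_def using les lds by (simp add: shuffle_sign_all om_010)
  have "QBB C W G n m p es ds - QBB C W' G n m p es ds
     = (fB W 0 {} {} - fB W' 0 {} {}) + (fB W G {..<n} {..<2 * m} - fB W' G {..<n} {..<2 * m})"
    unfolding QV XX using sumdiff by (simp add: algebra_simps)
  also have "\<dots> = 2 * (\<Sum>(ls,js)\<in>supp W G (Suc n) m \<union> supp W' G (Suc n) m.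
      (W G (Suc n) m ls js - W' G (Suc n) m ls js) * (om01 C (p + int (ls!0) + 2) * tailB C n m ls js es ds))"
    unfolding f1 f2 conv_BB1[OF N1 p unk finW] conv_BB1[OF N1 p unk finW'] conv_BB2[OF N1 p unk finW] conv_BB2[OF N1 p unk finW']
      sum_diff_supp[OF finW finW'] by simp
  finally show ?thesis .
qed



lemma levels_BF:
  assumes G1: "G1 \<le> G" and S: "S \<subseteq> {..<n}" and T: "T \<subseteq> {..<2 * m - 1}" and eT: "even (card T)"
    and m1: "1 \<le> m" and ns1: "\<not> (G1 = 0 \<and> S = {} \<and> T = {})"
  shows "G1 + (card S + 1) + 2 * (card T div 2) < G + n + 2 * m"
    and "G - G1 + (n - card S) + 2 * (m - card T div 2) < G + n + 2 * m"
    and "1 \<le> n - card S + (m - card T div 2)"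
proof -
  have cS: "card S \<le> n" using S by (metis card_lessThan card_mono finite_lessThan)
  have cT: "card T \<le> 2 * m - 1" using T by (metis card_lessThan card_mono finite_lessThan)
  have fT: "finite T" using T finite_subset by blast
  have fS: "finite S" using S finite_subset by blast
  have d1: "G1 \<noteq> 0 \<or> card S \<noteq> 0 \<or> card T \<noteq> 0" using ns1 fS fT by auto
  show "G1 + (card S + 1) + 2 * (card T div 2) < G + n + 2 * m"
    using cS cT eT G1 m1 by presburger
  show "G - G1 + (n - card S) + 2 * (m - card T div 2) < G + n + 2 * m"
    using d1 cS cT eT G1 m1 by presburger
  show "1 \<le> n - card S + (m - card T div 2)"
    using cS cT eT G1 m1 by presburger
qed

lemma QBF_diff:
  assumes N1: "1 \<le> NN C" and p: "p < - int (NN C) - 1" and m1: "1 \<le> m"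
    and low: "lowagree W W' (G + n + 2 * m)" and unk: "unknown_index G n m"
    and finW: "finite (supp W G n m)" and finW': "finite (supp W' G n m)"
  shows "QBF C W G n m p es ds - QBF C W' G n m p es ds = (\<Sum>(ls,js)\<in>supp W G n m \<union> supp W' G n m.
      (W G n m ls js - W' G n m ls js) * (om01 C (p + int (js!0) + 1) * tailF C n m ls js es ds))"
proof -
  define fB where "fB V G1 S T = shuffle_sign T (2 * m - 1) *
        infsum (\<lambda>a. om C V G1 (card S + 1) (card T div 2) (a # nths es S) (nths ds T)
                   * om C V (G - G1) (n - card S) (m - card T div 2)
                        (nths es (- S)) ((p - a) # nths ds (- T))) UNIV" for V G1 S T
  define X where "X V = (if 2 \<le> G then infsum (\<lambda>a. om C V (G - 2) (n + 1) m (a # es) ((p - a) # ds)) UNIV else 0)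
   + (if 1 \<le> G then Qc C 0 * (of_int (p + 1) + of_int (cf C) / 2) * om C V (G - 1) n m es ((p + 1) # ds)
      else 0)" for V
  define Ts where "Ts = {T. T \<subseteq> {..<2 * m - 1} \<and> even (card T)}"
  have QV: "QBF C V G n m p es ds = X V + (\<Sum>G1\<in>{0..G}. \<Sum>S\<in>Pow {..<n}. \<Sum>T\<in>Ts. fB V G1 S T)" for V
    unfolding QBF_def X_def fB_def Ts_def by simp
  have XX: "X W = X W'"
  proof -
    have "2 \<le> G \<Longrightarrow> om C W (G - 2) (n + 1) m = om C W' (G - 2) (n + 1) m"
      by (rule om_low[OF low]) auto
    moreover have "1 \<le> G \<Longrightarrow> om C W (G - 1) n m = om C W' (G - 1) n m"
      by (rule om_low[OF low]) (use m1 in auto)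
    ultimately show ?thesis unfolding X_def by (cases "2 \<le> G"; cases "1 \<le> G") auto
  qed
  define D where "D = {(0::nat, {}::nat set, {}::nat set)}"
  have Dsub: "D \<subseteq> {0..G} \<times> Pow {..<n} \<times> Ts" unfolding D_def Ts_def by auto
  have ns: "fB W G1 S T - fB W' G1 S T = 0"
    if "G1 \<in> {0..G}" "S \<in> Pow {..<n}" "T \<in> Ts" "(G1, S, T) \<notin> D" for G1 S T
  proof -
    have h: "G1 \<le> G" "S \<subseteq> {..<n}" "T \<subseteq> {..<2 * m - 1}" "even (card T)" "1 \<le> m"
      "\<not> (G1 = 0 \<and> S = {} \<and> T = {})"
      using that m1 unfolding Ts_def D_def by auto
    have "om C W G1 (card S + 1) (card T div 2) = om C W' G1 (card S + 1) (card T div 2)"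
      by (rule om_low[OF low levels_BF(1)[OF h]]) simp
    moreover have "om C W (G - G1) (n - card S) (m - card T div 2) = om C W' (G - G1) (n - card S) (m - card T div 2)"
      by (rule om_low[OF low levels_BF(2)[OF h] levels_BF(3)[OF h]])
    ultimately show ?thesis unfolding fB_def by simp
  qed
  have sumdiff: "(\<Sum>G1\<in>{0..G}. \<Sum>S\<in>Pow {..<n}. \<Sum>T\<in>Ts. fB W G1 S T) - (\<Sum>G1\<in>{0..G}. \<Sum>S\<in>Pow {..<n}. \<Sum>T\<in>Ts. fB W' G1 S T)
     = fB W 0 {} {} - fB W' 0 {} {}"
  proof -
    have "(\<Sum>G1\<in>{0..G}. \<Sum>S\<in>Pow {..<n}. \<Sum>T\<in>Ts. fB W G1 S T) - (\<Sum>G1\<in>{0..G}. \<Sum>S\<in>Pow {..<n}. \<Sum>T\<in>Ts. fB W' G1 S T)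
       = (\<Sum>G1\<in>{0..G}. \<Sum>S\<in>Pow {..<n}. \<Sum>T\<in>Ts. fB W G1 S T - fB W' G1 S T)"
      by (simp add: sum_subtractf)
    also have "\<dots> = (\<Sum>(G1,S,T)\<in>D. fB W G1 S T - fB W' G1 S T)"
      by (rule nested3) (use Dsub ns in \<open>auto simp: Ts_def\<close>)
    also have "\<dots> = fB W 0 {} {} - fB W' 0 {} {}"
      unfolding D_def by simp
    finally show ?thesis .
  qed
  have f1: "fB V 0 {} {} = infsum (\<lambda>a. om01 C a * om C V G n m es ((p - a) # ds)) UNIV" for V
    unfolding fB_def by (simp add: shuffle_sign_empty om_010 nths_all)
  have "QBF C W G n m p es ds - QBF C W' G n m p es ds = fB W 0 {} {} - fB W' 0 {} {}"
    unfolding QV XX using sumdiff by (simp add: algebra_simps)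
  also have "\<dots> = (\<Sum>(ls,js)\<in>supp W G n m \<union> supp W' G n m.
      (W G n m ls js - W' G n m ls js) * (om01 C (p + int (js!0) + 1) * tailF C n m ls js es ds))"
    unfolding f1 conv_BF[OF N1 p unk m1 finW] conv_BF[OF N1 p unk m1 finW'] sum_diff_supp[OF finW finW'] by simp
  finally show ?thesis .
qed



lemma valid_fin: "valid_family W \<Longrightarrow> unknown_index G n m \<Longrightarrow> finite (supp W G n m)"
  unfolding valid_family_def by blast

lemma valid_anti: "valid_family W \<Longrightarrow> unknown_index G n m \<Longrightarrow> length ls = n \<Longrightarrow> length js = 2 * m \<Longrightarrow>
   i < 2 * m \<Longrightarrow> j < 2 * m \<Longrightarrow> i \<noteq> j \<Longrightarrow> W G n m ls (js[i := js ! j, j := js ! i]) = - W G n m ls js"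
  unfolding valid_family_def by blast

lemma outside_supp:
  assumes "length ls = n" "length js = 2 * m" "(ls, js) \<notin> supp W G n m \<union> supp W' G n m"
  shows "W G n m ls js = W' G n m ls js"
  using assms unfolding supp_def by auto

lemma step:
  assumes N1: "1 \<le> NN C" and tau: "tau C (1 - int (NN C)) \<noteq> 0"
    and vW: "valid_family W" and vW': "valid_family W'"
    and lW: "loop_eqs C W" and lW': "loop_eqs C W'"
    and low: "lowagree W W' (G + n + 2 * m)" and unk: "unknown_index G n m" and nm: "1 \<le> n + m"
  shows "agree_at W W' G n m"
proof (cases n)
  case (Suc n0)
  note n = Suc
  have finW: "finite (supp W G (Suc n0) m)" and finW': "finite (supp W' G (Suc n0) m)"
    using valid_fin[OF vW] valid_fin[OF vW'] unk n by auto
  let ?A = "supp W G (Suc n0) m \<union> supp W' G (Suc n0) m"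
  have low': "lowagree W W' (G + (n0 + 1) + 2 * m)" using low n by simp
  have unk': "unknown_index G (Suc n0) m" using unk n by simp
  have cond: "2 \<le> G + n0 + 2 * m \<and> (G, n0, m) \<noteq> (2, 0, 0)" using unk n unfolding unknown_index_def by auto
  have eq: "(\<Sum>(ls,js)\<in>?A. (W G (Suc n0) m ls js - W' G (Suc n0) m ls js) * (om01 C (p + int (ls!0) + 2) * tailB C n0 m ls js es ds)) = 0"
    if p: "p < - int (NN C) - 1" and les: "length es = n0" and lds: "length ds = 2 * m" for p es ds
  proof -
    have "QBB C W G n0 m p es ds + QFF C W G n0 m p es ds = 0"
      using lW[unfolded loop_eqs_def, THEN conjunct1, rule_format, OF cond conjI[OF p conjI[OF les lds]]] .
    moreover have "QBB C W' G n0 m p es ds + QFF C W' G n0 m p es ds = 0"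
      using lW'[unfolded loop_eqs_def, THEN conjunct1, rule_format, OF cond conjI[OF p conjI[OF les lds]]] .
    moreover have "QFF C W G n0 m p es ds = QFF C W' G n0 m p es ds" by (rule QFF_eq[OF low'])
    moreover have "QBB C W G n0 m p es ds - QBB C W' G n0 m p es ds
       = (QBB C W G n0 m p es ds + QFF C W G n0 m p es ds) - (QBB C W' G n0 m p es ds + QFF C W' G n0 m p es ds)"
      using \<open>QFF C W G n0 m p es ds = QFF C W' G n0 m p es ds\<close> by simp
    ultimately have "QBB C W G n0 m p es ds - QBB C W' G n0 m p es ds = 0" by simp
    then show ?thesis using QBB_diff[OF N1 p low' unk' finW finW' les lds] by simp
  qed
  have Asub: "?A \<subseteq> {(ls, js). length ls = Suc n0 \<and> length js = 2 * m}" by (auto simp: supp_def)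
  have "\<forall>(ls,js)\<in>?A. W G (Suc n0) m ls js - W' G (Suc n0) m ls js = 0"
  proof (rule indep_BB[OF N1 tau _ Asub, where c = "\<lambda>ls js. W G (Suc n0) m ls js - W' G (Suc n0) m ls js"])
    show "finite ?A" using finW finW' by blast
    fix p :: int and es ds :: "int list" assume "p < - int (NN C) - 1" "length es = n0" "length ds = 2 * m"
    then show "(\<Sum>(ls,js)\<in>?A. (W G (Suc n0) m ls js - W' G (Suc n0) m ls js) * (om01 C (p + int (ls!0) + 2) * tailB C n0 m ls js es ds)) = 0"
      by (rule eq)
  qed
  then have inA: "W G (Suc n0) m ls js = W' G (Suc n0) m ls js" if "(ls, js) \<in> ?A" for ls js
    using that by auto
  show ?thesis unfolding agree_at_def n
  proof (intro allI impI)
    fix ls js :: "nat list" assume l: "length ls = Suc n0 \<and> length js = 2 * m"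
    show "W G (Suc n0) m ls js = W' G (Suc n0) m ls js"
    proof (cases "(ls, js) \<in> ?A")
      case True then show ?thesis by (rule inA)
    next
      case False then show ?thesis using outside_supp[of ls "Suc n0" js m W G W'] l by simp
    qed
  qed
next
  case 0
  note n = 0
  have m1: "1 \<le> m" using nm n by simp
  have finW: "finite (supp W G 0 m)" and finW': "finite (supp W' G 0 m)"
    using valid_fin[OF vW] valid_fin[OF vW'] unk n by auto
  let ?A = "supp W G 0 m \<union> supp W' G 0 m"
  have low': "lowagree W W' (G + 0 + 2 * m)" using low n by simp
  have unk': "unknown_index G 0 m" using unk n by simp
  have cond: "3 \<le> G + 0 + 2 * m \<and> 1 \<le> m" using unk n m1 unfolding unknown_index_def by auto
  have eq: "(\<Sum>(ls,js)\<in>?A. (W G 0 m ls js - W' G 0 m ls js) * (om01 C (p + int (js!0) + 1) * tailF C 0 m ls js es ds)) = 0"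
    if p: "p < - int (NN C) - 1" and les: "length es = 0" and lds: "length ds = 2 * m - 1" for p es ds
  proof -
    have "QBF C W G 0 m p es ds = 0"
      using lW[unfolded loop_eqs_def, THEN conjunct2, rule_format, OF cond conjI[OF p conjI[OF les lds]]] .
    moreover have "QBF C W' G 0 m p es ds = 0"
      using lW'[unfolded loop_eqs_def, THEN conjunct2, rule_format, OF cond conjI[OF p conjI[OF les lds]]] .
    ultimately have "QBF C W G 0 m p es ds - QBF C W' G 0 m p es ds = 0" by simp
    then show ?thesis unfolding QBF_diff[OF N1 p m1 low' unk' finW finW'] .
  qed
  have Asub: "?A \<subseteq> {(ls, js). length ls = 0 \<and> length js = 2 * m}" by (auto simp: supp_def)
  have "\<forall>(ls,js)\<in>?A. 1 \<le> js ! 0 \<longrightarrow> W G 0 m ls js - W' G 0 m ls js = 0"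
  proof (rule indep_BF[OF N1 tau m1 _ Asub, where c = "\<lambda>ls js. W G 0 m ls js - W' G 0 m ls js"])
    show "finite ?A" using finW finW' by blast
    fix p :: int and es ds :: "int list" assume "p < - int (NN C) - 1" "length es = 0" "length ds = 2 * m - 1"
    then show "(\<Sum>(ls,js)\<in>?A. (W G 0 m ls js - W' G 0 m ls js) * (om01 C (p + int (js!0) + 1) * tailF C 0 m ls js es ds)) = 0"
      by (rule eq)
  qed
  then have inA: "W G 0 m ls js = W' G 0 m ls js" if "(ls, js) \<in> ?A" "1 \<le> js ! 0" for ls js
    using that by auto
  have pos: "W G 0 m ls js = W' G 0 m ls js" if "length ls = 0" "length js = 2 * m" "1 \<le> js ! 0" for ls js
  proof (cases "(ls, js) \<in> ?A")
    case True then show ?thesis using inA that by blast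
  next
    case False then show ?thesis using outside_supp[of ls 0 js m W G W'] that by simp
  qed
  have anti: "W G 0 m ls (js[i := js ! j, j := js ! i]) - W' G 0 m ls (js[i := js ! j, j := js ! i])
       = - (W G 0 m ls js - W' G 0 m ls js)"
    if "length ls = 0" "length js = 2 * m" "i < 2 * m" "j < 2 * m" "i \<noteq> j" for ls js i j
    using valid_anti[OF vW unk' that] valid_anti[OF vW' unk' that] by simp
  show ?thesis unfolding agree_at_def n
  proof (intro allI impI)
    fix ls js :: "nat list" assume l: "length ls = 0 \<and> length js = 2 * m"
    show "W G 0 m ls js = W' G 0 m ls js"
    proof (cases "1 \<le> js ! 0")
      case True then show ?thesis using pos l by auto
    next
      case False
      then have j0: "js ! 0 = 0" by simp
      show ?thesis
      proof (cases "\<exists>k<2 * m. js ! k \<noteq> 0")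
        case True
        then obtain k where k: "k < 2 * m" "js ! k \<noteq> 0" by blast
        have k0: "k \<noteq> 0" using k(2) j0 by (metis)
        have z: "0 < 2 * m" using m1 by simp
        let ?js = "js[0 := js ! k, k := js ! 0]"
        have "?js ! 0 = js ! k" using k0 l z by (simp add: nth_list_update)
        then have "W G 0 m ls ?js = W' G 0 m ls ?js" using pos[of ls ?js] l k by simp
        then show ?thesis using anti[of ls js 0 k] l k k0 z by simp
      next
        case False
        have z: "1 < 2 * m" using m1 by simp
        have "js ! 0 = 0" "js ! 1 = 0" using False z l by auto
        then have "js[0 := js ! 1, 1 := js ! 0] = js" using list_update_id[of js 0] list_update_id[of js 1] by simp
        then show ?thesis using anti[of ls js 0 1] l z by simp
      qed
    qed
  qed
qed


theorem proposition2p8: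
  fixes C :: curve and W W' :: family
  assumes "1 \<le> NN C"
    and "tau C (1 - int (NN C)) \<noteq> 0"
    and "\<forall>k l. 1 \<le> k \<and> 1 \<le> l \<longrightarrow> phi C k l = phi C l k"
    and "ns C \<longrightarrow> (\<forall>k l. psi C k l = - psi C l k)"
    and "\<not> ns C \<longrightarrow> psi C 0 0 = 0 \<and> (\<forall>k l. psi C k l + psi C l k + psi C 0 k * psi C 0 l = 0)"
    and "valid_family W" and "valid_family W'"
    and "loop_eqs C W" and "loop_eqs C W'"
  shows "(\<forall>G n m. unknown_index G n m \<and> 1 \<le> n + m \<longrightarrow> agree_at W W' G n m)
       \<and> (\<forall>G n m. unknown_index G n m \<and> 1 \<le> n + m
            \<and> (\<forall>G' n' m'. unknown_index G' n' m' \<and> 1 \<le> n' + m'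
                 \<and> G' + n' + 2 * m' < G + n + 2 * m \<longrightarrow> agree_at W W' G' n' m')
            \<longrightarrow> agree_at W W' G n m)"
proof -
  have st: "agree_at W W' G n m" if "unknown_index G n m" "1 \<le> n + m" "lowagree W W' (G + n + 2 * m)" for G n m
    by (rule step[OF assms(1,2,6,7,8,9) that(3,1,2)])
  have all: "\<forall>G n m. G + n + 2 * m = L \<longrightarrow> unknown_index G n m \<and> 1 \<le> n + m \<longrightarrow> agree_at W W' G n m" for L
  proof (induction L rule: less_induct)
    case (less L)
    show ?case
    proof (intro allI impI)
      fix G n m assume h: "G + n + 2 * m = L" "unknown_index G n m \<and> 1 \<le> n + m"
      have "lowagree W W' (G + n + 2 * m)" unfolding lowagree_def using less h(1) by blast
      then show "agree_at W W' G n m" using st h(2) by blast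
    qed
  qed
  show ?thesis
  proof
    show "\<forall>G n m. unknown_index G n m \<and> 1 \<le> n + m \<longrightarrow> agree_at W W' G n m" using all by blast
    show "\<forall>G n m. unknown_index G n m \<and> 1 \<le> n + m
            \<and> (\<forall>G' n' m'. unknown_index G' n' m' \<and> 1 \<le> n' + m'
                 \<and> G' + n' + 2 * m' < G + n + 2 * m \<longrightarrow> agree_at W W' G' n' m')
            \<longrightarrow> agree_at W W' G n m"
      using st unfolding lowagree_def by blast
  qed
qed

end
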